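(* Let $L$ be a multiplicative lattice, $n\ge1$, and $q$ a proper element of $L$. (1) If for all $a,b\in L$ with $a^nb\le q\le a\wedge b$ one has $a^n\le q$ or $a^{n-1}b\le q$, then $q$ is a strongly quasi $n$-absorbing element of $L$. (2) If for all $a_1,a_2,\dots,a_{n+1}\in L$ with $a_1a_2\cdots a_{n+1}\le q\le a_1\wedge a_2\wedge\cdots\wedge a_{n+1}$ one has $a_1\cdots a_{i-1}a_{i+1}\cdots a_{n+1}\le q$ for some $1\le i\le n+1$, then $q$ is a strongly quasi $n$-absorbing element of $L$.
   Context: A multiplicative lattice is a complete lattice $L$ with least element $0$ and compact greatest element $1$, equipped with a commutative, associative product that distributes over arbitrary joins and has $1$ as multiplicative identity. $a^0=1$. A proper element $q$ ($q<1$) is strongly quasi $n$-absorbing if whenever $a,b\in L$ (not necessarily compact) satisfy $a^nb\le q$, then $a^n\le q$ or $a^{n-1}b\le q$. *)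

theory Defs
  imports Main
begin

class multiplicative_lattice = complete_lattice + comm_monoid_mult +
  assumes one_eq_top: "1 = top"
  assumes mult_Sup_distrib: "a * Sup S = Sup ((\<lambda>s. a * s) ` S)"
  assumes top_compact: "top \<le> Sup S \<Longrightarrow> \<exists>T. finite T \<and> T \<subseteq> S \<and> top \<le> Sup T"

definition strongly_quasi_n_absorbing :: "nat \<Rightarrow> 'a::multiplicative_lattice \<Rightarrow> bool" where
  "strongly_quasi_n_absorbing n q \<longleftrightarrow> q < top \<and>
     (\<forall>a b. a ^ n * b \<le> q \<longrightarrow> a ^ n \<le> q \<or> a ^ (n - 1) * b \<le> q)"

end

theory Submission
  imports Defs
begin

unbundle lattice_syntax

lemma ml_sup_distrib: "(c::'a::multiplicative_lattice) * (sup (a) (b)) = c * a \<squnion> c * b"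
  using mult_Sup_distrib[of c "{a,b}"] by simp

lemma ml_mono: "(a::'a::multiplicative_lattice) \<le> b \<Longrightarrow> c * a \<le> c * b"
  by (metis ml_sup_distrib sup.absorb_iff2)

lemma ml_mono2: "(a::'a::multiplicative_lattice) \<le> b \<Longrightarrow> a * c \<le> b * c"
  by (metis ml_mono mult.commute)

lemma ml_absorb: "(x::'a::multiplicative_lattice) * q \<le> q"
  using ml_mono2[of x 1 q] one_eq_top by (metis mult_1 top_greatest)

lemma ml_absorb2: "(q::'a::multiplicative_lattice) * x \<le> q"
  using ml_absorb by (metis mult.commute)

lemma ml_pow: "((a::'a::multiplicative_lattice) \<squnion> q) ^ k \<le> a ^ k \<squnion> q"
proof (induction k)
  case 0 then show ?case by simp
next
  case (Suc k)
  have "(sup (a) (q)) ^ Suc k = (sup (a) (q)) * (sup (a) (q)) ^ k" by simp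
  also have "\<dots> \<le> (sup (a) (q)) * (sup (a ^ k) (q))" using Suc ml_mono by blast
  also have "\<dots> = (sup (a * a ^ k) (a * q)) \<squnion> (sup (q * a ^ k) (q * q))"
    by (metis ml_sup_distrib mult.commute)
  also have "\<dots> \<le> a ^ Suc k \<squnion> q"
    using ml_absorb[of a q] ml_absorb2[of q "a^k"] ml_absorb[of q q]
    by (simp add: le_supI1 le_supI2)
  finally show ?case .
qed

lemma ml_key:
  assumes "(a::'a::multiplicative_lattice) ^ n * b \<le> q"
  shows "(sup (a) (q)) ^ n * (sup (b) (q)) \<le> q"
proof -
  have "(sup (a) (q)) ^ n * (sup (b) (q)) \<le> (sup (a ^ n) (q)) * (sup (b) (q))"
    using ml_pow ml_mono2 by blast
  also have "\<dots> = (sup (a ^ n * b) (a ^ n * q)) \<squnion> (sup (q * b) (q * q))"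
    by (metis ml_sup_distrib mult.commute)
  also have "\<dots> \<le> q"
    using assms ml_absorb[of "a^n" q] ml_absorb2[of q b] ml_absorb[of q q] by simp
  finally show ?thesis .
qed

lemma ml_pow_mono: "(a::'a::multiplicative_lattice) \<le> c \<Longrightarrow> a ^ k \<le> c ^ k"
proof (induction k)
  case 0 then show ?case by simp
next
  case (Suc k)
  have "a * a ^ k \<le> c * a ^ k" using Suc ml_mono2 by blast
  also have "\<dots> \<le> c * c ^ k" using Suc ml_mono by blast
  finally show ?case by simp
qed

lemma ml_mono_both: "(a::'a::multiplicative_lattice) \<le> c \<Longrightarrow> b \<le> d \<Longrightarrow> a * b \<le> c * d"
  by (meson ml_mono ml_mono2 order_trans)

theorem mainTheorem15:
  fixes q :: "'a::multiplicative_lattice" and n :: nat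
  assumes "n \<ge> 1" and "q < top"
  shows "((\<forall>a b. a ^ n * b \<le> q \<and> q \<le> inf a b \<longrightarrow> a ^ n \<le> q \<or> a ^ (n - 1) * b \<le> q)
            \<longrightarrow> strongly_quasi_n_absorbing n q)
       \<and> ((\<forall>x :: nat \<Rightarrow> 'a. prod x {1..n+1} \<le> q \<and> q \<le> Inf (x ` {1..n+1})
              \<longrightarrow> (\<exists>i\<in>{1..n+1}. prod x ({1..n+1} - {i}) \<le> q))
            \<longrightarrow> strongly_quasi_n_absorbing n q)"
proof (intro conjI impI)
  assume H: "\<forall>a b. a ^ n * b \<le> q \<and> q \<le> inf a b \<longrightarrow> a ^ n \<le> q \<or> a ^ (n - 1) * b \<le> q"
  show "strongly_quasi_n_absorbing n q"
    unfolding strongly_quasi_n_absorbing_def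
  proof (intro conjI allI impI)
    show "q < top" by fact
    fix a b assume ab: "a ^ n * b \<le> q"
    have "(sup (a) (q)) ^ n \<le> q \<or> (sup (a) (q)) ^ (n - 1) * (sup (b) (q)) \<le> q"
      using H[rule_format, of "a \<squnion> q" "b \<squnion> q"] ml_key[OF ab] by simp
    then show "a ^ n \<le> q \<or> a ^ (n - 1) * b \<le> q"
      by (meson ml_pow_mono ml_mono_both sup_ge1 order_trans)
  qed
next
  assume H: "\<forall>x :: nat \<Rightarrow> 'a. prod x {1..n+1} \<le> q \<and> q \<le> Inf (x ` {1..n+1})
              \<longrightarrow> (\<exists>i\<in>{1..n+1}. prod x ({1..n+1} - {i}) \<le> q)"
  show "strongly_quasi_n_absorbing n q"
    unfolding strongly_quasi_n_absorbing_def
  proof (intro conjI allI impI)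
    show "q < top" by fact
    fix a b assume ab: "a ^ n * b \<le> q"
    define x where "x = (\<lambda>i::nat. if i = n+1 then b \<squnion> q else a \<squnion> q)"
    have split: "{1..n+1} = insert (n+1) {1..n}" by auto
    have c1: "prod x {1..n} = (sup (a) (q)) ^ n"
      using prod.cong[of "{1..n}" "{1..n}" x "\<lambda>_. a \<squnion> q"] by (simp add: x_def)
    have p: "prod x {1..n+1} = (sup (a) (q)) ^ n * (sup (b) (q))"
      unfolding split by (simp add: c1 x_def mult.commute)
    have "q \<le> Inf (x ` {1..n+1})" by (auto simp: x_def intro!: Inf_greatest)
    then obtain i where i: "i \<in> {1..n+1}" and iq: "prod x ({1..n+1} - {i}) \<le> q"
      using H ml_key[OF ab] p by metis
    show "a ^ n \<le> q \<or> a ^ (n - 1) * b \<le> q"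
    proof (cases "i = n+1")
      case True
      then have "{1..n+1} - {i} = {1..n}" by auto
      then have "(sup (a) (q)) ^ n \<le> q" using iq c1 by simp
      then show ?thesis by (meson ml_pow_mono sup_ge1 order_trans)
    next
      case False
      then have s: "{1..n+1} - {i} = insert (n+1) ({1..n} - {i})" using i by auto
      have ci: "card ({1..n} - {i}) = n - 1" using i False by auto
      have c2: "prod x ({1..n} - {i}) = (sup (a) (q)) ^ (n - 1)"
        using prod.cong[of "{1..n} - {i}" "{1..n} - {i}" x "\<lambda>_. a \<squnion> q"] by (simp add: x_def) (metis ci One_nat_def)
      have "prod x ({1..n+1} - {i}) = (sup (a) (q)) ^ (n - 1) * (sup (b) (q))"
        unfolding s by (subst prod.insert) (auto simp: c2 ci x_def mult.commute simp del: One_nat_def)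
      then have "(sup (a) (q)) ^ (n - 1) * (sup (b) (q)) \<le> q" using iq by simp
      then show ?thesis by (meson ml_pow_mono ml_mono_both sup_ge1 order_trans)
    qed
  qed
qed

end
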